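(* Let $A$ be a finite alphabet with at least two symbols and $X=A^{\mathbb{N}}$. There exists a sequence $\{\mu_\ell\}_{\ell\in\mathbb{N}}$ in $\mathcal{M}^+(X)$ which converges with respect to the projective distance $\rho$ but does not converge with respect to Ornstein's $\bar{d}$-distance.
   Context: For $\pmb{a}=a_1\cdots a_n\in A^n$, $[\pmb{a}]=\{\pmb{x}\in X:\ x_1\cdots x_n=\pmb{a}\}$. $\mathcal{M}^+(X)$ is the set of Borel probability measures $\mu$ on $X$ with $\mu[\pmb{a}]>0$ for all finite words $\pmb{a}$. Projective distance: $\rho(\mu,\nu)=\sup_{n\in\mathbb{N}}\max_{\pmb{a}\in A^n}\frac1n\left|\log\frac{\mu[\pmb{a}]}{\nu[\pmb{a}]}\right|$. A coupling of $\mu,\nu$ is a Borel probability measure $\lambda$ on $(A\times A)^{\mathbb{N}}$ with coordinate marginals $\mu$ and $\nu$; $J(\mu,\nu)$ is the set of couplings. With $\bar{\Delta}=\{\pmb{x}\times\pmb{y}: x_1\neq y_1\}$ and $T$ the left shift on $(A\times A)^{\mathbb{N}}$, $\bar{d}(\mu,\nu)=\inf_{\lambda\in J(\mu,\nu)}\limsup_{n\to\infty}\frac1n\sum_{k=0}^{n-1}\lambda(T^{-k}\bar{\Delta})$. *)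

theory Defs
  imports "HOL-Probability.Probability"
begin

text \<open>The shift space X = A^N over a finite alphabet 'a, with its Borel sigma-algebra
  (= product sigma-algebra of the discrete sigma-algebras, since A is finite).\<close>

definition Xsig :: "(nat \<Rightarrow> 'a) measure" where
  "Xsig = PiM UNIV (\<lambda>_. count_space UNIV)"

text \<open>Cylinder set [a] for a finite word a = a_1 ... a_n (list, 0-indexed).\<close>
definition cylinder :: "'a list \<Rightarrow> (nat \<Rightarrow> 'a) set" where
  "cylinder w = {x. \<forall>i<length w. x i = w ! i}"

definition prob_on_X :: "(nat \<Rightarrow> 'a) measure \<Rightarrow> bool" where
  "prob_on_X \<mu> \<longleftrightarrow> prob_space \<mu> \<and> sets \<mu> = sets Xsig"

definition Mplus :: "(nat \<Rightarrow> 'a) measure set" where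
  "Mplus = {\<mu>. prob_on_X \<mu> \<and> (\<forall>w. measure \<mu> (cylinder w) > 0)}"

definition rho :: "(nat \<Rightarrow> 'a) measure \<Rightarrow> (nat \<Rightarrow> 'a) measure \<Rightarrow> ereal" where
  "rho \<mu> \<nu> = (SUP n\<in>{1..}. SUP w\<in>{w::'a list. length w = n}.
      ereal (\<bar>ln (measure \<mu> (cylinder w) / measure \<nu> (cylinder w))\<bar> / real n))"

definition couplings :: "(nat \<Rightarrow> 'a) measure \<Rightarrow> (nat \<Rightarrow> 'a) measure \<Rightarrow> (nat \<Rightarrow> 'a \<times> 'a) measure set" where
  "couplings \<mu> \<nu> = {L. prob_space L \<and> sets L = sets (PiM UNIV (\<lambda>_::nat. count_space (UNIV::('a\<times>'a) set)))
      \<and> distr L Xsig (\<lambda>z i. fst (z i)) = \<mu> \<and> distr L Xsig (\<lambda>z i. snd (z i)) = \<nu>}"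

text \<open>Ornstein's d-bar distance. T^{-k} of {x \<times> y : x_1 \<noteq> y_1} is the set where the k-th
  coordinates (0-indexed) differ.\<close>
definition dbar :: "(nat \<Rightarrow> 'a) measure \<Rightarrow> (nat \<Rightarrow> 'a) measure \<Rightarrow> ereal" where
  "dbar \<mu> \<nu> = (INF L\<in>couplings \<mu> \<nu>.
      limsup (\<lambda>n. ereal ((1 / real n) * (\<Sum>k<n. measure L {z. fst (z k) \<noteq> snd (z k)}))))"

end

theory Submission
  imports Defs
begin


definition beta :: "nat \<Rightarrow> real" where "beta j = 1/((real j+1)*(real j+2))"

definition Q :: "nat \<Rightarrow> (bool \<times> 'a::finite) pmf" where
  "Q j = pair_pmf (bernoulli_pmf (beta j)) (pmf_of_set UNIV)"

definition Qm :: "nat \<Rightarrow> 'a::finite \<Rightarrow> nat \<Rightarrow> (bool \<times> 'a) pmf" where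
  "Qm l c j = (if j = l then bernoulli_pmf (3/4) \<bind> (\<lambda>b. if b then return_pmf (True,c) else Q j) else Q j)"

fun Phi :: "(nat \<Rightarrow> bool \<times> 'a) \<Rightarrow> nat \<Rightarrow> 'a" where
  "Phi w 0 = snd (w 0)"
| "Phi w (Suc k) = (if fst (w (Suc k)) then snd (w (Suc k)) else Phi w k)"

definition PP :: "(nat \<Rightarrow> 'd pmf) \<Rightarrow> (nat \<Rightarrow> 'd) measure" where
  "PP R = PiM UNIV (\<lambda>j. measure_pmf (R j))"

definition mk :: "(nat \<Rightarrow> (bool \<times> 'a) pmf) \<Rightarrow> (nat \<Rightarrow> 'a) measure" where
  "mk R = distr (PP R) Xsig Phi"

lemma beta_pos: "0 < beta j" by (simp add: beta_def)
lemma beta_le: "beta j \<le> 1/2"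
proof -
  have "1*2 \<le> (real j+1)*(real j+2)" by (intro mult_mono) auto
  then show ?thesis unfolding beta_def by (intro frac_le) auto
qed

lemma pmf_Q: "pmf (Q j) (b,x::'a::finite) = (if b then beta j else 1 - beta j) / real CARD('a)"
  using beta_pos[of j] beta_le[of j]
  by (simp add: Q_def pmf_pair pmf_of_set)

lemma pmf_Q_ge: "pmf (Q j) (y::bool\<times>'a::finite) \<ge> beta j / real CARD('a)"
proof -
  obtain b x where y: "y = (b,x)" by force
  have "beta j \<le> (if b then beta j else 1 - beta j)" using beta_le[of j] by simp
  then show ?thesis unfolding y pmf_Q by (rule divide_right_mono) simp
qed

lemma pmf_Qm_l: "pmf (Qm l c l) y = 3/4 * (if y = (True,c) then 1 else 0) + 1/4 * pmf (Q l) y"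
  by (simp add: Qm_def pmf_bind pmf_return)

lemma space_PP[simp]: "space (PP R) = UNIV"
  by (simp add: PP_def space_PiM)

lemma prob_PP: "prob_space (PP R)"
  unfolding PP_def by (rule prob_space_PiM) (simp add: prob_space_measure_pmf)

lemma meas_coord: "(\<lambda>w. Phi w i) \<in> measurable (PP R) (count_space UNIV)"
proof (induction i)
  case 0
  have "(\<lambda>w. w 0) \<in> measurable (PP R) (measure_pmf (R 0))"
    unfolding PP_def by (rule measurable_component_singleton) simp
  then have "(\<lambda>w. w 0) \<in> measurable (PP R) (count_space UNIV)" by simp
  then show ?case by simp (rule measurable_compose, assumption, simp)
next
  case (Suc i)
  have c: "(\<lambda>w. w (Suc i)) \<in> measurable (PP R) (count_space UNIV)"
    using measurable_component_singleton[of "Suc i" UNIV "\<lambda>j. measure_pmf (R j)"]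
    unfolding PP_def by simp
  have f: "(\<lambda>w. fst (w (Suc i))) \<in> measurable (PP R) (count_space UNIV)"
    by (rule measurable_compose[OF c]) simp
  have s: "(\<lambda>w. snd (w (Suc i))) \<in> measurable (PP R) (count_space UNIV)"
    by (rule measurable_compose[OF c]) simp
  have p: "{w \<in> space (PP R). fst (w (Suc i))} \<in> sets (PP R)"
    using f by (simp add: pred_def)
  have "(\<lambda>w. if fst (w (Suc i)) then snd (w (Suc i)) else Phi w i) \<in> measurable (PP R) (count_space UNIV)"
    by (rule measurable_If[OF s Suc.IH p])
  then show ?case by (simp only: Phi.simps)
qed

lemma meas_Phi: "Phi \<in> measurable (PP R) Xsig"
  unfolding Xsig_def
  by (rule measurable_PiM_single') (auto intro: meas_coord)

lemma phi_local: "(\<forall>j\<le>i. x j = y j) \<Longrightarrow> Phi x i = Phi y i"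
  by (induction i) auto

definition XW :: "'a list \<Rightarrow> (nat \<Rightarrow> bool \<times> 'a) set" where
  "XW w = {r \<in> PiE {..<length w} (\<lambda>_. UNIV). \<forall>i<length w. Phi r i = w!i}"

lemma space_Xsig[simp]: "space Xsig = UNIV"
  by (simp add: Xsig_def space_PiM)

lemma cylinder_sets: "cylinder w \<in> sets Xsig"
proof -
  have "{x \<in> space Xsig. \<forall>i<length w. x i = w!i} \<in> sets Xsig"
    unfolding Xsig_def by measurable
  then show ?thesis by (simp add: cylinder_def)
qed

lemma sets_all_fin:
  fixes R :: "nat \<Rightarrow> 'd::finite pmf"
  assumes "finite J" "X \<subseteq> PiE J (\<lambda>_. UNIV)"
  shows "X \<in> sets (PiM J (\<lambda>j. measure_pmf (R j)))"
proof -
  have fx: "finite X" using assms by (meson finite_PiE finite rev_finite_subset)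
  have sing: "PiE J (\<lambda>j. {r j}) = {r}" if "r \<in> X" for r
    using that assms(2) by (intro PiE_singleton) (auto simp: PiE_def)
  have "X = (\<Union>r\<in>X. PiE J (\<lambda>j. {r j}))"
    using sing by simp
  also have "\<dots> \<in> sets (PiM J (\<lambda>j. measure_pmf (R j)))"
    using fx assms(1) by (intro sets.finite_UN sets_PiM_I_finite) auto
  finally show ?thesis .
qed

lemma pps: "product_prob_space (\<lambda>j. measure_pmf (R j))"
  by (simp add: product_prob_space_def product_prob_space_axioms_def product_sigma_finite_def prob_space_measure_pmf prob_space_imp_sigma_finite)

lemma pss: "product_sigma_finite (\<lambda>j. measure_pmf (R j))"
  by (simp add: product_sigma_finite_def prob_space_measure_pmf prob_space_imp_sigma_finite)

lemma cyl_eq: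
  fixes R :: "nat \<Rightarrow> (bool \<times> 'a::finite) pmf"
  shows "measure (mk R) (cylinder w) = measure (PiM {..<length w} (\<lambda>j. measure_pmf (R j))) (XW w)"
proof -
  interpret product_prob_space "\<lambda>j. measure_pmf (R j)" UNIV by (rule pps)
  have "measure (mk R) (cylinder w) = measure (PP R) (Phi -` cylinder w \<inter> space (PP R))"
    unfolding mk_def by (rule measure_distr[OF meas_Phi cylinder_sets])
  also have "Phi -` cylinder w \<inter> space (PP R) = prod_emb UNIV (\<lambda>j. measure_pmf (R j)) {..<length w} (XW w)"
  proof -
    have *: "\<forall>i<length w. Phi (restrict x {..<length w}) i = Phi x i" for x :: "nat \<Rightarrow> bool \<times> 'a"
      by (auto intro!: phi_local)
    show ?thesis
    proof (rule set_eqI)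
      fix x
      show "x \<in> Phi -` cylinder w \<inter> space (PP R) \<longleftrightarrow> x \<in> prod_emb UNIV (\<lambda>j. measure_pmf (R j)) {..<length w} (XW w)"
        using *[of x] by (simp add: cylinder_def prod_emb_def XW_def PiE_iff)
    qed
  qed
  also have "measure (PP R) \<dots> = measure (PiM {..<length w} (\<lambda>j. measure_pmf (R j))) (XW w)"
  proof -
    have "XW w \<in> sets (PiM {..<length w} (\<lambda>j. measure_pmf (R j)))"
      by (rule sets_all_fin) (auto simp: XW_def)
    then have "emeasure (PiM UNIV (\<lambda>j. measure_pmf (R j))) (prod_emb UNIV (\<lambda>j. measure_pmf (R j)) {..<length w} (XW w))
       = emeasure (PiM {..<length w} (\<lambda>j. measure_pmf (R j))) (XW w)"
      by (rule emeasure_PiM_emb'[OF subset_UNIV finite_lessThan])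
    then show ?thesis unfolding measure_def PP_def by (rule arg_cong[where f=enn2real])
  qed
  finally show ?thesis .
qed

lemma fin_sum:
  fixes R :: "nat \<Rightarrow> 'd::finite pmf"
  assumes "finite J" "X \<subseteq> PiE J (\<lambda>_. UNIV)"
  shows "measure (PiM J (\<lambda>j. measure_pmf (R j))) X = (\<Sum>r\<in>X. \<Prod>j\<in>J. pmf (R j) (r j))"
proof -
  have fx: "finite X" using assms by (meson finite_PiE finite rev_finite_subset)
  have "emeasure (PiM J (\<lambda>j. measure_pmf (R j))) X = (\<Sum>r\<in>X. emeasure (PiM J (\<lambda>j. measure_pmf (R j))) {r})"
  proof (rule emeasure_eq_sum_singleton[OF fx])
    fix r assume "r \<in> X"
    then have "{r} \<subseteq> PiE J (\<lambda>_. UNIV)" using assms(2) by blast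
    then show "{r} \<in> sets (PiM J (\<lambda>j. measure_pmf (R j)))" by (rule sets_all_fin[OF assms(1)])
  qed
  also have "\<dots> = (\<Sum>r\<in>X. ennreal (\<Prod>j\<in>J. pmf (R j) (r j)))"
  proof (rule sum.cong[OF refl])
    fix r assume r: "r \<in> X"
    then have "{r} = PiE J (\<lambda>j. {r j})"
      using assms(2) by (intro PiE_singleton[symmetric]) (auto simp: PiE_def)
    then show "emeasure (PiM J (\<lambda>j. measure_pmf (R j))) {r} = ennreal (\<Prod>j\<in>J. pmf (R j) (r j))"
      using assms(1) by (simp add: product_sigma_finite.emeasure_PiM[OF pss] emeasure_pmf_single prod_ennreal)
  qed
  also have "\<dots> = ennreal (\<Sum>r\<in>X. \<Prod>j\<in>J. pmf (R j) (r j))"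
    by (rule sum_ennreal) (simp add: prod_nonneg)
  finally have "emeasure (PiM J (\<lambda>j. measure_pmf (R j))) X = ennreal (\<Sum>r\<in>X. \<Prod>j\<in>J. pmf (R j) (r j))" .
  then show ?thesis
    unfolding measure_def by (simp only:) (rule enn2real_ennreal, simp add: sum_nonneg prod_nonneg)
qed

lemma cmp_fin:
  fixes R R' :: "nat \<Rightarrow> 'd::finite pmf"
  assumes "finite J" "X \<subseteq> PiE J (\<lambda>_. UNIV)"
    and a: "\<And>j y. j \<in> J \<Longrightarrow> a j * pmf (R j) y \<le> pmf (R' j) y" "\<And>j. j \<in> J \<Longrightarrow> 0 \<le> a j"
  shows "(\<Prod>j\<in>J. a j) * measure (PiM J (\<lambda>j. measure_pmf (R j))) X \<le> measure (PiM J (\<lambda>j. measure_pmf (R' j))) X"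
  unfolding fin_sum[OF assms(1,2)] sum_distrib_left prod.distrib[symmetric]
  by (intro sum_mono prod_mono) (auto intro: a mult_nonneg_nonneg)

lemma cmp_mk:
  fixes R R' :: "nat \<Rightarrow> (bool \<times> 'a::finite) pmf"
  assumes a: "\<And>j y. j < length w \<Longrightarrow> a j * pmf (R j) y \<le> pmf (R' j) y" "\<And>j. j < length w \<Longrightarrow> 0 \<le> a j"
  shows "(\<Prod>j<length w. a j) * measure (mk R) (cylinder w) \<le> measure (mk R') (cylinder w)"
  unfolding cyl_eq by (rule cmp_fin) (auto simp: XW_def a)



lemma pmf_Q_pos: "pmf (Q j) (y::bool\<times>'a::finite) > 0"
  using pmf_Q_ge[of j y] beta_pos[of j]
  by (smt (verit, best) divide_pos_pos of_nat_0_less_iff zero_less_card_finite)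

lemma pmf_Qm_ge: "pmf (Qm l c j) y \<ge> (if j = l then 1/4 else 1) * pmf (Q j) (y::bool\<times>'a::finite)"
proof (cases "j = l")
  case True
  then show ?thesis using pmf_Qm_l[of l c y] by simp
next
  case False
  then show ?thesis by (simp add: Qm_def)
qed

lemma pmf_Qm_le: "(if j = l then beta l / real CARD('a) else 1) * pmf (Qm l c j) y \<le> pmf (Q j) (y::bool\<times>'a::finite)"
proof (cases "j = l")
  case True
  have "beta l / real CARD('a) * pmf (Qm l c j) y \<le> beta l / real CARD('a) * 1"
    using beta_pos[of l] by (intro mult_left_mono pmf_le_1) auto
  then show ?thesis using True pmf_Q_ge[of l y] by simp
next
  case False
  then show ?thesis by (simp add: Qm_def)
qed

lemma pmf_Qm_pos: "pmf (Qm l c j) (y::bool\<times>'a::finite) > 0"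
proof -
  have "0 < (if j = l then 1/4 else 1) * pmf (Q j) y" using pmf_Q_pos[of j y] by simp
  then show ?thesis using pmf_Qm_ge[where j=j and l=l and c=c and y=y] by linarith
qed

lemma prob_mk: "prob_on_X (mk R)"
  unfolding prob_on_X_def mk_def
  by (auto intro!: prob_space.prob_space_distr[OF prob_PP meas_Phi])

lemma pos_mk:
  fixes R :: "nat \<Rightarrow> (bool \<times> 'a::finite) pmf"
  assumes pos: "\<And>j y. pmf (R j) y > 0"
  shows "measure (mk R) (cylinder w) > 0"
proof -
  define r where "r = restrict (\<lambda>i. (True, w!i)) {..<length w}"
  have phi_r: "Phi r i = w!i" if "i < length w" for i
    using that by (cases i) (auto simp: r_def)
  have rX: "r \<in> XW w" using phi_r by (auto simp: XW_def r_def)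
  have sub: "XW w \<subseteq> PiE {..<length w} (\<lambda>_. UNIV)" by (auto simp: XW_def)
  have fin: "finite (XW w)" using sub by (meson finite_PiE finite rev_finite_subset finite_lessThan)
  have "0 < (\<Prod>j<length w. pmf (R j) (r j))" by (intro prod_pos) (simp add: pos)
  also have "\<dots> \<le> (\<Sum>r\<in>XW w. \<Prod>j<length w. pmf (R j) (r j))"
    by (rule member_le_sum[OF rX _ fin]) (simp add: prod_nonneg)
  finally show ?thesis unfolding cyl_eq fin_sum[OF finite_lessThan sub] .
qed

lemma mk_Mplus:
  fixes R :: "nat \<Rightarrow> (bool \<times> 'a::finite) pmf"
  assumes pos: "\<And>j y. pmf (R j) y > 0"
  shows "mk R \<in> Mplus"
  unfolding Mplus_def using prob_mk pos_mk[OF pos] by auto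



definition Kc :: "'a::finite itself \<Rightarrow> nat \<Rightarrow> real" where
  "Kc t l = ln (4 * real CARD('a) * ((real l+1)*(real l+2)))"

lemma Kc_nonneg: "0 \<le> Kc TYPE('a::finite) l"
proof -
  have "1 \<le> real CARD('a)" by (simp add: Suc_leI)
  moreover have "1 \<le> (real l+1)*(real l+2)" using mult_mono[of "1::real" "real l+1" 1 "real l+2"] by simp
  ultimately have "1 \<le> 4 * real CARD('a) * ((real l+1)*(real l+2))"
    by (smt (verit, ccfv_SIG) mult_less_cancel_left2 mult_mono)
  then show ?thesis unfolding Kc_def by simp
qed

lemma ratio_bounds:
  fixes c :: "'a::finite" and w :: "'a list"
  shows "\<bar>ln (measure (mk (Qm l c)) (cylinder w) / measure (mk Q) (cylinder w))\<bar> \<le> Kc TYPE('a) l"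
    and "length w \<le> l \<Longrightarrow> measure (mk (Qm l c)) (cylinder w) = measure (mk Q) (cylinder w)"
proof -
  define a where "a = measure (mk (Qm l c)) (cylinder w)"
  define b where "b = measure (mk Q) (cylinder w)"
  define X where "X = real CARD('a) * ((real l+1)*(real l+2))"
  have apos: "a > 0" unfolding a_def by (rule pos_mk) (rule pmf_Qm_pos)
  have bpos: "b > 0" unfolding b_def by (rule pos_mk) (rule pmf_Q_pos)
  have h1: "(\<Prod>j<length w. (if j = l then 1/4 else 1)) * b \<le> a"
    unfolding a_def b_def by (rule cmp_mk, rule pmf_Qm_ge, simp)
  have h2: "(\<Prod>j<length w. (if j = l then beta l / real CARD('a) else 1)) * a \<le> b"
    unfolding a_def b_def by (rule cmp_mk, rule pmf_Qm_le, simp add: beta_pos less_imp_le)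
  have h1': "(if l < length w then 1/4 else 1) * b \<le> a" using h1 by simp
  have h2': "(if l < length w then beta l / real CARD('a) else 1) * a \<le> b" using h2 by simp
  have bc: "beta l / real CARD('a) \<le> 1"
  proof -
    have "beta l / real CARD('a) \<le> beta l" using beta_pos[of l]
      by (simp add: divide_le_eq mult_le_cancel_left1 Suc_leI)
    then show ?thesis using beta_le[of l] by linarith
  qed
  have "1/4 * b \<le> a" using h1' bpos by (cases "l < length w") auto
  then have lo: "1/4 \<le> a / b" using bpos by (simp add: pos_le_divide_eq)
  have "beta l / real CARD('a) * a \<le> b"
  proof (cases "l < length w")
    case True then show ?thesis using h2' by simp
  next
    case False then have "a \<le> b" using h2' by simp
    moreover have "beta l / real CARD('a) * a \<le> 1 * a" using bc apos by (intro mult_right_mono) auto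
    ultimately show ?thesis by simp
  qed
  then have e: "(a * beta l) * real CARD('a) / real CARD('a) \<le> b * real CARD('a)"
    by (simp add: field_simps)
  have pp: "0 < (real l+1)*(real l+2)" by simp
  have "a = (a * beta l) * ((real l+1)*(real l+2))" unfolding beta_def using pp by simp
  also have "\<dots> \<le> (b * real CARD('a)) * ((real l+1)*(real l+2))"
    using e pp by (intro mult_right_mono) auto
  also have "\<dots> = X * b" unfolding X_def by simp
  finally have "a \<le> X * b" .
  then have up: "a / b \<le> X" using bpos by (simp add: pos_divide_le_eq)
  have X1: "1 \<le> X"
  proof -
    have x1: "1 \<le> real CARD('a)" by (simp add: Suc_leI)
    have x2: "1 \<le> (real l+1)*(real l+2)" using mult_mono[of "1::real" "real l+1" 1 "real l+2"] by simp
    show ?thesis using mult_mono[OF x1 x2] unfolding X_def by simp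
  qed
  have K: "Kc TYPE('a) l = ln 4 + ln X"
    unfolding Kc_def X_def using X1 X_def by (simp add: ln_mult mult.assoc)
  have abpos: "0 < a / b" using apos bpos by simp
  have "ln (a/b) \<le> ln X" using up abpos X1 by (subst ln_le_cancel_iff) auto
  moreover have "ln (1/4) \<le> ln (a/b)" using lo abpos by (subst ln_le_cancel_iff) auto
  moreover have "0 \<le> ln X" using X1 by simp
  moreover have "ln (1/4::real) = - ln 4" by (simp add: ln_div)
  ultimately show "\<bar>ln (measure (mk (Qm l c)) (cylinder w) / measure (mk Q) (cylinder w))\<bar> \<le> Kc TYPE('a) l"
    unfolding a_def[symmetric] b_def[symmetric] K by (smt (verit) ln_ge_zero_iff)
  assume "length w \<le> l"
  then show "measure (mk (Qm l c)) (cylinder w) = measure (mk Q) (cylinder w)"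
    using h1' h2' unfolding a_def[symmetric] b_def[symmetric] by simp
qed

lemma rho_bound:
  fixes c :: "'a::finite"
  shows "rho (mk (Qm l c)) (mk Q) \<le> ereal (Kc TYPE('a) l / (real l + 1))"
  unfolding rho_def
proof (intro SUP_least)
  fix n :: nat and w :: "'a list"
  assume n: "n \<in> {1..}" and w: "w \<in> {w. length w = n}"
  show "ereal (\<bar>ln (measure (mk (Qm l c)) (cylinder w) / measure (mk Q) (cylinder w))\<bar> / real n)
        \<le> ereal (Kc TYPE('a) l / (real l + 1))"
  proof (cases "n \<le> l")
    case True
    then have "measure (mk (Qm l c)) (cylinder w) = measure (mk Q) (cylinder w)"
      using w ratio_bounds(2)[of w l c] by simp
    moreover have "measure (mk Q) (cylinder w) > 0" by (rule pos_mk) (rule pmf_Q_pos)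
    ultimately show ?thesis using Kc_nonneg[where 'a='a and l=l] by simp
  next
    case False
    have "\<bar>ln (measure (mk (Qm l c)) (cylinder w) / measure (mk Q) (cylinder w))\<bar> / real n
          \<le> Kc TYPE('a) l / real n"
      using ratio_bounds(1)[of l c w] n by (intro divide_right_mono) auto
    also have "\<dots> \<le> Kc TYPE('a) l / (real l + 1)"
      using False Kc_nonneg[where 'a='a and l=l] by (intro divide_left_mono) auto
    finally show ?thesis by simp
  qed
qed

lemma rho_nonneg: "0 \<le> rho (\<mu>::(nat \<Rightarrow> 'a) measure) \<nu>"
  unfolding rho_def
  by (rule SUP_upper2[of 1], simp, rule SUP_upper2[of "[undefined]"]) auto

lemma Kc_le: "Kc TYPE('a::finite) l / (real l + 1) \<le> ln (8 * real CARD('a)) / (real l + 1) + 2 * (ln (real l + 1) / (real l + 1))"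
proof -
  have c: "0 < real CARD('a)" by simp
  have "4 * real CARD('a) * ((real l+1)*(real l+2)) \<le> (8 * real CARD('a)) * ((real l + 1) * (real l + 1))"
    using c by (simp add: field_simps)
  then have "Kc TYPE('a) l \<le> ln ((8 * real CARD('a)) * ((real l + 1) * (real l + 1)))"
    unfolding Kc_def using c by (subst ln_le_cancel_iff) (auto intro!: mult_pos_pos)
  also have "\<dots> = ln (8 * real CARD('a)) + 2 * ln (real l + 1)"
    using c by (simp add: ln_mult)
  finally have "Kc TYPE('a) l \<le> ln (8 * real CARD('a)) + 2 * ln (real l + 1)" .
  then have "Kc TYPE('a) l / (real l + 1) \<le> (ln (8 * real CARD('a)) + 2 * ln (real l + 1)) / (real l + 1)"
    by (intro divide_right_mono) auto
  then show ?thesis by (simp add: add_divide_distrib)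
qed

lemma Kc_lim: "(\<lambda>l. ln (8 * real CARD('a::finite)) / (real l + 1) + 2 * (ln (real l + 1) / (real l + 1))) \<longlonglongrightarrow> 0"
proof -
  have a: "(\<lambda>l. ln (8 * real CARD('a)) / real (Suc l)) \<longlonglongrightarrow> 0"
    by (rule LIMSEQ_Suc[OF lim_const_over_n])
  have b: "(\<lambda>l. ln (real (Suc l)) / real (Suc l)) \<longlonglongrightarrow> 0"
    by (rule LIMSEQ_Suc[OF lim_ln_over_n])
  have "(\<lambda>l. ln (8 * real CARD('a)) / real (Suc l) + 2 * (ln (real (Suc l)) / real (Suc l))) \<longlonglongrightarrow> 0 + 2 * 0"
    by (intro tendsto_intros a b)
  then show ?thesis by (simp add: add.commute)
qed

lemma rho_lim:
  fixes c :: "nat \<Rightarrow> 'a::finite"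
  shows "(\<lambda>l. rho (mk (Qm l (c l))) (mk Q)) \<longlonglongrightarrow> 0"
proof (rule tendsto_sandwich[of "\<lambda>_. 0" _ _ "\<lambda>l. ereal (ln (8 * real CARD('a)) / (real l + 1) + 2 * (ln (real l + 1) / (real l + 1)))"])
  show "\<forall>\<^sub>F l in sequentially. 0 \<le> rho (mk (Qm l (c l))) (mk Q)" by (simp add: rho_nonneg)
  show "\<forall>\<^sub>F l in sequentially. rho (mk (Qm l (c l))) (mk Q) \<le> ereal (ln (8 * real CARD('a)) / (real l + 1) + 2 * (ln (real l + 1) / (real l + 1)))"
    using rho_bound Kc_le order_trans ereal_less_eq(3) by (metis (no_types, lifting) always_eventually)
  show "((\<lambda>_. 0) \<longlongrightarrow> (0::ereal)) sequentially" by simp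
  show "(\<lambda>l. ereal (ln (8 * real CARD('a)) / (real l + 1) + 2 * (ln (real l + 1) / (real l + 1)))) \<longlonglongrightarrow> 0"
    using tendsto_ereal[OF Kc_lim] by (simp add: zero_ereal_def)
qed



lemma coord_sets_X: "{x. x k = d} \<in> sets Xsig"
proof -
  have "{x \<in> space Xsig. x k = d} \<in> sets Xsig" unfolding Xsig_def by measurable
  then show ?thesis by simp
qed

lemma marg_eq:
  "measure (mk R) {x. x k = d} = measure (PP R) {\<omega>. Phi \<omega> k = d}"
  unfolding mk_def by (subst measure_distr[OF meas_Phi coord_sets_X]) (simp add: vimage_def)

lemma comp_meas: "(\<lambda>\<omega>. \<omega> j) \<in> measurable (PP R) (measure_pmf (R j))"
  unfolding PP_def by (rule measurable_component_singleton) simp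

lemma coord_sets: "{\<omega>. \<omega> j \<in> A} \<in> sets (PP R)"
  using measurable_sets[OF comp_meas[of j R], of A] by (simp add: vimage_def)

lemma phi_sets: "{\<omega>. Phi \<omega> k = d} \<in> sets (PP R)"
  using measurable_sets[OF meas_coord[of k R], of "{d}"] by (simp add: vimage_def)

lemma coord_prob: "measure (PP R) {\<omega>. \<omega> j \<in> A} = measure_pmf.prob (R j) A"
proof -
  interpret product_prob_space "\<lambda>j. measure_pmf (R j)" UNIV by (rule pps)
  have "emeasure (PiM UNIV (\<lambda>j. measure_pmf (R j))) {x \<in> space (PiM UNIV (\<lambda>j. measure_pmf (R j))). x j \<in> A}
        = emeasure (measure_pmf (R j)) A"
    by (rule emeasure_PiM_Collect_single) auto
  then show ?thesis unfolding measure_def PP_def by (simp add: space_PiM)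
qed

lemma phi_const: "l \<le> k \<Longrightarrow> (\<forall>j. l < j \<and> j \<le> k \<longrightarrow> \<not> fst (\<omega> j)) \<Longrightarrow> Phi \<omega> k = Phi \<omega> l"
proof (induction k)
  case 0 then show ?case by simp
next
  case (Suc k)
  show ?case
  proof (cases "l = Suc k")
    case True then show ?thesis by simp
  next
    case False
    then have "l \<le> k" using Suc.prems by simp
    then show ?thesis using Suc by auto
  qed
qed

lemma phi_at: "\<omega> l = (True,c) \<Longrightarrow> Phi \<omega> l = c"
  by (cases l) auto

lemma marg_gen:
  fixes R :: "nat \<Rightarrow> (bool \<times> 'a) pmf"
  assumes "l \<le> k"
  shows "measure (mk R) {x. x k = c} \<ge> pmf (R l) (True,c) - (\<Sum>j\<in>{l<..k}. measure_pmf.prob (R j) {y. fst y})"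
    and "d \<noteq> c \<Longrightarrow> measure (mk R) {x. x k = d} \<le> (1 - pmf (R l) (True,c)) + (\<Sum>j\<in>{l<..k}. measure_pmf.prob (R j) {y. fst y})"
proof -
  interpret P: prob_space "PP R" by (rule prob_PP)
  define A where "A = {\<omega>::nat \<Rightarrow> bool \<times> 'a. \<omega> l \<in> {(True,c)}}"
  define U where "U = (\<Union>j\<in>{l<..k}. {\<omega>::nat \<Rightarrow> bool \<times> 'a. \<omega> j \<in> {y. fst y}})"
  have As: "A \<in> sets (PP R)" unfolding A_def by (rule coord_sets)
  have Us: "U \<in> sets (PP R)" unfolding U_def by (intro sets.finite_UN coord_sets) auto
  have mA: "measure (PP R) A = pmf (R l) (True,c)"
    unfolding A_def coord_prob by (simp add: measure_pmf_single)
  have mU: "measure (PP R) U \<le> (\<Sum>j\<in>{l<..k}. measure_pmf.prob (R j) {y. fst y})"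
    unfolding U_def coord_prob[symmetric] by (rule measure_UNION_le[OF finite_greaterThanAtMost coord_sets])
  have key: "Phi \<omega> k = c" if "\<omega> \<in> A" "\<omega> \<notin> U" for \<omega>
  proof -
    have "Phi \<omega> k = Phi \<omega> l" using that assms by (intro phi_const) (auto simp: U_def)
    also have "\<dots> = c" using that by (intro phi_at) (auto simp: A_def)
    finally show ?thesis .
  qed
  have "A \<subseteq> {\<omega>. Phi \<omega> k = c} \<union> U" using key by blast
  then have "measure (PP R) A \<le> measure (PP R) ({\<omega>. Phi \<omega> k = c} \<union> U)"
    by (intro P.finite_measure_mono sets.Un phi_sets Us)
  also have "\<dots> \<le> measure (PP R) {\<omega>. Phi \<omega> k = c} + measure (PP R) U"
    by (intro measure_Un_le phi_sets Us)
  finally show "measure (mk R) {x. x k = c} \<ge> pmf (R l) (True,c) - (\<Sum>j\<in>{l<..k}. measure_pmf.prob (R j) {y. fst y})"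
    unfolding marg_eq using mA mU by linarith
  assume dc: "d \<noteq> c"
  have "{\<omega>. Phi \<omega> k = d} \<subseteq> (space (PP R) - A) \<union> U" using key dc by auto
  then have "measure (PP R) {\<omega>. Phi \<omega> k = d} \<le> measure (PP R) ((space (PP R) - A) \<union> U)"
    by (intro P.finite_measure_mono sets.Un Us sets.compl_sets As)
  also have "\<dots> \<le> measure (PP R) (space (PP R) - A) + measure (PP R) U"
    by (intro measure_Un_le Us sets.compl_sets As)
  also have "measure (PP R) (space (PP R) - A) = 1 - measure (PP R) A"
    by (rule P.prob_compl[OF As])
  finally show "measure (mk R) {x. x k = d} \<le> (1 - pmf (R l) (True,c)) + (\<Sum>j\<in>{l<..k}. measure_pmf.prob (R j) {y. fst y})"
    unfolding marg_eq using mA mU by linarith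
qed

lemma prob_Q_fst: "measure_pmf.prob (Q j :: (bool \<times> 'a::finite) pmf) {y. fst y} = beta j"
proof -
  have "{y::bool\<times>'a. fst y} = {True} \<times> UNIV" by auto
  then show ?thesis
    unfolding Q_def using beta_pos[of j] beta_le[of j]
    by (simp add: measure_pmf_prob_product measure_pmf_single)
qed

lemma beta_sum: "(\<Sum>j\<in>{l<..l+d}. beta j) = 1/(real l+2) - 1/(real l + real d + 2)"
proof (induction d)
  case 0 then show ?case by simp
next
  case (Suc d)
  have "{l<..l + Suc d} = insert (l + Suc d) {l<..l+d}" by auto
  then have "(\<Sum>j\<in>{l<..l+Suc d}. beta j) = beta (l + Suc d) + (\<Sum>j\<in>{l<..l+d}. beta j)" by simp
  also have "\<dots> = beta (l + Suc d) + (1/(real l+2) - 1/(real l + real d + 2))"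
    using Suc.IH by simp
  also have "\<dots> = 1/(real l+2) - 1/(real l + real (Suc d) + 2)"
  proof -
    define x where "x = real l + real d + 2"
    have xp: "x > 0" unfolding x_def by simp
    have "beta (l + Suc d) = 1/(x*(x+1))" unfolding beta_def x_def by (simp add: algebra_simps)
    also have "\<dots> = 1/x - 1/(x+1)" using xp by (simp add: field_simps)
    finally have "beta (l + Suc d) = 1/x - 1/(x+1)" .
    moreover have "real l + real (Suc d) + 2 = x + 1" unfolding x_def by simp
    ultimately show ?thesis unfolding x_def by simp
  qed
  finally show ?case .
qed

lemma beta_sum_le: "l \<le> k \<Longrightarrow> (\<Sum>j\<in>{l<..k}. beta j) \<le> 1/(real l+2)"
proof -
  assume "l \<le> k"
  then obtain d where "k = l + d" using le_Suc_ex by blast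
  then show ?thesis using beta_sum[of l d] by simp
qed

lemma sum_Qm: "l \<le> k \<Longrightarrow> (\<Sum>j\<in>{l<..k}. measure_pmf.prob (Qm l c j :: (bool \<times> 'a::finite) pmf) {y. fst y}) \<le> 1/(real l+2)"
proof -
  assume lk: "l \<le> k"
  have "(\<Sum>j\<in>{l<..k}. measure_pmf.prob (Qm l c j :: (bool \<times> 'a) pmf) {y. fst y}) = (\<Sum>j\<in>{l<..k}. beta j)"
    by (rule sum.cong) (auto simp: Qm_def prob_Q_fst)
  then show ?thesis using beta_sum_le[OF lk] by simp
qed

lemma marg_lo: "l \<le> k \<Longrightarrow> measure (mk (Qm l (c::'a::finite))) {x. x k = c} \<ge> 3/4 - 1/(real l+2)"
proof -
  assume lk: "l \<le> k"
  have "pmf (Qm l c l) (True,c) \<ge> 3/4" using pmf_Qm_l[of l c "(True,c)"] by simp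
  then show ?thesis using marg_gen(1)[OF lk, of "Qm l c" c] sum_Qm[OF lk, of c] by linarith
qed

lemma marg_up: "l \<le> k \<Longrightarrow> d \<noteq> c \<Longrightarrow> measure (mk (Qm l (c::'a::finite))) {x. x k = d} \<le> 1/4 + 1/(real l+2)"
proof -
  assume lk: "l \<le> k" and dc: "d \<noteq> c"
  have "pmf (Qm l c l) (True,c) \<ge> 3/4" using pmf_Qm_l[of l c "(True,c)"] by simp
  then show ?thesis using marg_gen(2)[OF lk dc, of "Qm l c"] sum_Qm[OF lk, of c] by linarith
qed



lemma coupling_marg:
  fixes \<mu> \<nu> :: "(nat \<Rightarrow> 'a) measure"
  assumes L: "L \<in> couplings \<mu> \<nu>"
  shows "measure \<mu> {x. x k = a} \<le> measure \<nu> {x. x k = a} + measure L {z. fst (z k) \<noteq> snd (z k)}"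
    and "measure \<nu> {x. x k = a} \<le> measure \<mu> {x. x k = a} + measure L {z. fst (z k) \<noteq> snd (z k)}"
proof -
  let ?PM = "PiM UNIV (\<lambda>_::nat. count_space (UNIV::('a\<times>'a) set))"
  have pL: "prob_space L" and sL: "sets L = sets ?PM"
    and d1: "distr L Xsig (\<lambda>z i. fst (z i)) = \<mu>" and d2: "distr L Xsig (\<lambda>z i. snd (z i)) = \<nu>"
    using L unfolding couplings_def by auto
  interpret prob_space L by (rule pL)
  have spL: "space L = UNIV" using sets_eq_imp_space_eq[OF sL] by (simp add: space_PiM)
  have comp: "(\<lambda>z. z i) \<in> measurable L (count_space UNIV)" for i
    using measurable_component_singleton[of i UNIV "\<lambda>_::nat. count_space (UNIV::('a\<times>'a) set)"]
    by (simp add: measurable_cong_sets[OF sL refl])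
  have setsL: "{z. z i \<in> B} \<in> sets L" for i B
    using measurable_sets[OF comp[of i], of B] by (simp add: spL vimage_def)
  have m1: "(\<lambda>z i. fst (z i)) \<in> measurable L Xsig"
    unfolding Xsig_def
    by (rule measurable_PiM_single') (auto intro: measurable_compose[OF comp])
  have m2: "(\<lambda>z i. snd (z i)) \<in> measurable L Xsig"
    unfolding Xsig_def
    by (rule measurable_PiM_single') (auto intro: measurable_compose[OF comp])
  have e1: "measure \<mu> {x. x k = a} = measure L {z. z k \<in> {p. fst p = a}}"
    unfolding d1[symmetric] by (subst measure_distr[OF m1 coord_sets_X]) (simp add: spL vimage_def)
  have e2: "measure \<nu> {x. x k = a} = measure L {z. z k \<in> {p. snd p = a}}"
    unfolding d2[symmetric] by (subst measure_distr[OF m2 coord_sets_X]) (simp add: spL vimage_def)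
  have D: "{z. fst (z k) \<noteq> snd (z k)} = {z. z k \<in> {p. fst p \<noteq> snd p}}" by simp
  have "{z. z k \<in> {p. fst p = a}} \<subseteq> {z. z k \<in> {p. snd p = a}} \<union> {z. z k \<in> {p. fst p \<noteq> snd p}}" by auto
  then have "measure L {z. z k \<in> {p. fst p = a}} \<le> measure L ({z. z k \<in> {p. snd p = a}} \<union> {z. z k \<in> {p. fst p \<noteq> snd p}})"
    by (intro finite_measure_mono sets.Un setsL)
  also have "\<dots> \<le> measure L {z. z k \<in> {p. snd p = a}} + measure L {z. z k \<in> {p. fst p \<noteq> snd p}}"
    by (intro measure_Un_le setsL)
  finally show "measure \<mu> {x. x k = a} \<le> measure \<nu> {x. x k = a} + measure L {z. fst (z k) \<noteq> snd (z k)}"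
    unfolding e1 e2 D .
  have "{z. z k \<in> {p. snd p = a}} \<subseteq> {z. z k \<in> {p. fst p = a}} \<union> {z. z k \<in> {p. fst p \<noteq> snd p}}" by auto
  then have "measure L {z. z k \<in> {p. snd p = a}} \<le> measure L ({z. z k \<in> {p. fst p = a}} \<union> {z. z k \<in> {p. fst p \<noteq> snd p}})"
    by (intro finite_measure_mono sets.Un setsL)
  also have "\<dots> \<le> measure L {z. z k \<in> {p. fst p = a}} + measure L {z. z k \<in> {p. fst p \<noteq> snd p}}"
    by (intro measure_Un_le setsL)
  finally show "measure \<nu> {x. x k = a} \<le> measure \<mu> {x. x k = a} + measure L {z. fst (z k) \<noteq> snd (z k)}"
    unfolding e1 e2 D .
qed

lemma dbar_avg:
  fixes \<mu> \<nu> :: "(nat \<Rightarrow> 'a) measure"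
  assumes "dbar \<mu> \<nu> < ereal e"
  shows "\<exists>N. \<forall>n\<ge>N. (\<Sum>k<n. measure \<mu> {x. x k = a}) \<le> (\<Sum>k<n. measure \<nu> {x. x k = a}) + e * real n
              \<and> (\<Sum>k<n. measure \<nu> {x. x k = a}) \<le> (\<Sum>k<n. measure \<mu> {x. x k = a}) + e * real n"
proof -
  obtain L where L: "L \<in> couplings \<mu> \<nu>"
    and lim: "limsup (\<lambda>n. ereal ((1 / real n) * (\<Sum>k<n. measure L {z. fst (z k) \<noteq> snd (z k)}))) < ereal e"
    using assms unfolding dbar_def INF_less_iff by blast
  have "eventually (\<lambda>n. ereal ((1 / real n) * (\<Sum>k<n. measure L {z. fst (z k) \<noteq> snd (z k)})) < ereal e) sequentially"
    by (rule Limsup_lessD[OF lim])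
  then obtain N where N: "\<And>n. n \<ge> N \<Longrightarrow> (1 / real n) * (\<Sum>k<n. measure L {z. fst (z k) \<noteq> snd (z k)}) < e"
    unfolding eventually_sequentially by auto
  show ?thesis
  proof (intro exI[of _ "Suc N"] allI impI)
    fix n assume n: "Suc N \<le> n"
    have npos: "0 < real n" using n by simp
    have "(1 / real n) * (\<Sum>k<n. measure L {z. fst (z k) \<noteq> snd (z k)}) < e" using N n by simp
    then have S: "(\<Sum>k<n. measure L {z. fst (z k) \<noteq> snd (z k)}) \<le> e * real n"
      using npos by (simp add: field_simps)
    have "(\<Sum>k<n. measure \<mu> {x. x k = a}) \<le> (\<Sum>k<n. measure \<nu> {x. x k = a} + measure L {z. fst (z k) \<noteq> snd (z k)})"
      by (intro sum_mono coupling_marg(1)[OF L])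
    also have "\<dots> = (\<Sum>k<n. measure \<nu> {x. x k = a}) + (\<Sum>k<n. measure L {z. fst (z k) \<noteq> snd (z k)})"
      by (rule sum.distrib)
    finally have A: "(\<Sum>k<n. measure \<mu> {x. x k = a}) \<le> (\<Sum>k<n. measure \<nu> {x. x k = a}) + e * real n"
      using S by linarith
    have "(\<Sum>k<n. measure \<nu> {x. x k = a}) \<le> (\<Sum>k<n. measure \<mu> {x. x k = a} + measure L {z. fst (z k) \<noteq> snd (z k)})"
      by (intro sum_mono coupling_marg(2)[OF L])
    also have "\<dots> = (\<Sum>k<n. measure \<mu> {x. x k = a}) + (\<Sum>k<n. measure L {z. fst (z k) \<noteq> snd (z k)})"
      by (rule sum.distrib)
    finally have B: "(\<Sum>k<n. measure \<nu> {x. x k = a}) \<le> (\<Sum>k<n. measure \<mu> {x. x k = a}) + e * real n"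
      using S by linarith
    show "(\<Sum>k<n. measure \<mu> {x. x k = a}) \<le> (\<Sum>k<n. measure \<nu> {x. x k = a}) + e * real n
              \<and> (\<Sum>k<n. measure \<nu> {x. x k = a}) \<le> (\<Sum>k<n. measure \<mu> {x. x k = a}) + e * real n"
      using A B by blast
  qed
qed

lemma sum_if:
  assumes "l \<le> n"
  shows "(\<Sum>k<n. if l \<le> k then x else y) = real l * y + real (n - l) * (x::real)"
proof -
  have U: "{..<n} = {..<l} \<union> {l..<n}" using assms by auto
  have "(\<Sum>k<n. if l \<le> k then x else y) = (\<Sum>k<l. if l \<le> k then x else y) + (\<Sum>k\<in>{l..<n}. if l \<le> k then x else y)"
    unfolding U by (rule sum.union_disjoint) auto
  also have "(\<Sum>k<l. if l \<le> k then x else y) = (\<Sum>k<l. y)" by (rule sum.cong) auto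
  also have "(\<Sum>k\<in>{l..<n}. if l \<le> k then x else y) = (\<Sum>k\<in>{l..<n}. x)" by (rule sum.cong) auto
  finally show ?thesis by simp
qed



theorem theorem3p2:
  assumes "CARD('a::finite) \<ge> 2"
  shows "\<exists>\<mu>s :: nat \<Rightarrow> (nat \<Rightarrow> 'a) measure.
           (\<forall>l. \<mu>s l \<in> Mplus)
         \<and> (\<exists>\<mu>\<in>Mplus. (\<lambda>l. rho (\<mu>s l) \<mu>) \<longlonglongrightarrow> 0)
         \<and> \<not> (\<exists>\<nu>\<in>Mplus. (\<lambda>l. dbar (\<mu>s l) \<nu>) \<longlonglongrightarrow> 0)"
proof -
  have "\<exists>a0 a1::'a. a0 \<noteq> a1"
  proof (rule ccontr)
    assume "\<not> (\<exists>a0 a1::'a. a0 \<noteq> a1)"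
    then have eq: "(UNIV::'a set) = {undefined}" by auto
    have "card (UNIV::'a set) = 1" unfolding eq by simp
    then show False using assms by simp
  qed
  then obtain a0 a1 :: 'a where a01: "a0 \<noteq> a1" by blast
  define c where "c l = (if even l then a0 else a1)" for l :: nat
  define \<mu>s where "\<mu>s l = mk (Qm l (c l))" for l
  have M1: "\<forall>l. \<mu>s l \<in> Mplus"
    unfolding \<mu>s_def by (auto intro!: mk_Mplus pmf_Qm_pos)
  have M2: "\<exists>\<mu>\<in>Mplus. (\<lambda>l. rho (\<mu>s l) \<mu>) \<longlonglongrightarrow> 0"
    using mk_Mplus[of Q, OF pmf_Q_pos] rho_lim[of c] unfolding \<mu>s_def by blast
  have M3: "\<not> (\<exists>\<nu>\<in>Mplus. (\<lambda>l. dbar (\<mu>s l) \<nu>) \<longlonglongrightarrow> 0)"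
  proof
    assume "\<exists>\<nu>\<in>Mplus. (\<lambda>l. dbar (\<mu>s l) \<nu>) \<longlonglongrightarrow> 0"
    then obtain \<nu> where lim: "(\<lambda>l. dbar (\<mu>s l) \<nu>) \<longlonglongrightarrow> 0" by blast
    have "eventually (\<lambda>l. dbar (\<mu>s l) \<nu> < ereal (1/8)) sequentially"
      by (rule order_tendstoD(2)[OF lim]) simp
    then obtain N where N: "\<And>l. l \<ge> N \<Longrightarrow> dbar (\<mu>s l) \<nu> < ereal (1/8)"
      unfolding eventually_sequentially by auto
    define l where "l = 2 * N + 20"
    define m where "m = l + 1"
    have cl: "c l = a0" unfolding c_def l_def by simp
    have cm: "c m = a1" unfolding c_def m_def l_def by simp
    obtain N1 where N1: "\<And>n. n \<ge> N1 \<Longrightarrow> (\<Sum>k<n. measure (\<mu>s l) {x. x k = a0}) \<le> (\<Sum>k<n. measure \<nu> {x. x k = a0}) + 1/8 * real n"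
      using dbar_avg[OF N[of l], of a0] unfolding l_def by auto
    obtain N2 where N2: "\<And>n. n \<ge> N2 \<Longrightarrow> (\<Sum>k<n. measure \<nu> {x. x k = a0}) \<le> (\<Sum>k<n. measure (\<mu>s m) {x. x k = a0}) + 1/8 * real n"
      using dbar_avg[OF N[of m], of a0] unfolding m_def l_def by auto
    define n where "n = N1 + N2 + 100 * (m + 1)"
    have s1: "(\<Sum>k<n. measure (\<mu>s l) {x. x k = a0}) \<le> (\<Sum>k<n. measure \<nu> {x. x k = a0}) + 1/8 * real n"
      by (rule N1) (simp add: n_def)
    have s2: "(\<Sum>k<n. measure \<nu> {x. x k = a0}) \<le> (\<Sum>k<n. measure (\<mu>s m) {x. x k = a0}) + 1/8 * real n"
      by (rule N2) (simp add: n_def)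
    have ln: "l \<le> n" and mn: "m \<le> n" unfolding n_def m_def by auto
    have lo: "(\<Sum>k<n. if l \<le> k then 7/10 else 0) \<le> (\<Sum>k<n. measure (\<mu>s l) {x. x k = a0})"
    proof (rule sum_mono)
      fix k assume "k \<in> {..<n}"
      show "(if l \<le> k then 7/10 else 0) \<le> measure (\<mu>s l) {x. x k = a0}"
      proof (cases "l \<le> k")
        case True
        have "3/4 - 1/(real l+2) \<le> measure (\<mu>s l) {x. x k = a0}"
          using marg_lo[OF True, of "c l"] unfolding \<mu>s_def cl by simp
        moreover have "1/(real l+2) \<le> 1/20" unfolding l_def by (simp add: field_simps)
        ultimately have "7/10 \<le> measure (\<mu>s l) {x. x k = a0}" by linarith
        then show ?thesis using True by simp
      qed simp
    qed
    have pm: "prob_space (\<mu>s m)" using M1 unfolding Mplus_def prob_on_X_def by auto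
    have up: "(\<Sum>k<n. measure (\<mu>s m) {x. x k = a0}) \<le> (\<Sum>k<n. if m \<le> k then 3/10 else 1)"
    proof (rule sum_mono)
      fix k assume "k \<in> {..<n}"
      show "measure (\<mu>s m) {x. x k = a0} \<le> (if m \<le> k then 3/10 else 1)"
      proof (cases "m \<le> k")
        case True
        have "measure (\<mu>s m) {x. x k = a0} \<le> 1/4 + 1/(real m+2)"
          using marg_up[OF True, of a0 "c m"] a01 unfolding \<mu>s_def cm by simp
        moreover have "1/(real m+2) \<le> 1/20" unfolding m_def l_def by (simp add: field_simps)
        ultimately have "measure (\<mu>s m) {x. x k = a0} \<le> 3/10" by linarith
        then show ?thesis using True by simp
      next
        case False
        then show ?thesis using prob_space.prob_le_1[OF pm] by simp
      qed
    qed
    have e1: "(\<Sum>k<n. if l \<le> k then 7/10 else 0) = real (n - l) * (7/10)"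
      using sum_if[OF ln, of "7/10" 0] by simp
    have e2: "(\<Sum>k<n. if m \<le> k then 3/10 else 1) = real m + real (n - m) * (3/10)"
      using sum_if[OF mn, of "3/10" 1] by simp
    have "real (n - l) = real n - real l" using ln by simp
    moreover have "real (n - m) = real n - real m" using mn by simp
    moreover have "real n \<ge> 100 * (real m + 1)" unfolding n_def by simp
    moreover have "real l \<le> real m" unfolding m_def by simp
    ultimately have F: "real (n - l) = real n - real l" "real (n - m) = real n - real m"
      "100 * (real m + 1) \<le> real n" "real l \<le> real m" by auto
    have "real (n - l) * (7/10) \<le> real m + real (n - m) * (3/10) + 1/8 * real n + 1/8 * real n"
      using lo up e1 e2 s1 s2 by linarith
    moreover have "real (n - l) * (7/10) = real n * (7/10) - real l * (7/10)" by (simp only: F(1) left_diff_distrib)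
    moreover have "real (n - m) * (3/10) = real n * (3/10) - real m * (3/10)" by (simp only: F(2) left_diff_distrib)
    ultimately have "real n * 15 \<le> real l * 70 + real m * 70" by linarith
    moreover have "0 \<le> real m" by simp
    ultimately show False using F(3,4) by argo
  qed
  show ?thesis using M1 M2 M3 by blast
qed


end
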